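(* Let $n\ge 2$ and let $\mathcal{F}$ be a maximal coclique of $\Gamma_{2n}$. Let $A$ be an $(n-1)$-space of $\mathrm{PG}(2n,q)$ that occurs in a flag of $\mathcal{F}$. Then there exists $k\in\{1,\ldots,n+1\}$ such that the number of flags in $\mathcal{F}$ that contain $A$ is $\begin{bmatrix}k\\ 1\end{bmatrix}_q$. Furthermore, this number is $\begin{bmatrix}n+1\\ 1\end{bmatrix}_q$ if and only if every flag $(A',B')\in \mathcal{F}$ satisfies $B'\cap A\neq \emptyset$.
   Context: $\mathrm{PG}(2n,q)$ is the projective space of projective dimension $2n$ over the field of order $q$; an $i$-space is a subspace of projective dimension $i$. An $(n-1,n)$-flag is a pair $(A,B)$ with $A$ an $(n-1)$-space, $B$ an $n$-space and $A\subseteq B$; it "contains" $A$ if its $(n-1)$-space is $A$. Two such flags $(A_1,B_1),(A_2,B_2)$ are opposite if $A_1\cap B_2=A_2\cap B_1=\emptyset$. $\Gamma_{2n}$ is the graph whose vertices are the $(n-1,n)$-flags, adjacent when opposite; a maximal coclique is an inclusion-maximal set of pairwise non-opposite flags. $\begin{bmatrix}k\\ 1\end{bmatrix}_q=\frac{q^k-1}{q-1}$. *)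

theory Defs
  imports "HOL-Analysis.Analysis"
begin

text \<open>PG(2n,q) is modelled by the vector space 'a^'n over a finite field 'a with
  CARD('n) = 2n+1; a projective i-space is a linear subspace of vector dimension i+1.
  Projective subspaces are disjoint iff the linear subspaces meet only in 0.\<close>

definition proj_space :: "nat \<Rightarrow> ('a::field ^ 'n) set \<Rightarrow> bool" where
  "proj_space i S \<longleftrightarrow> vec.subspace S \<and> vec.dim S = i + 1"

definition disjoint_sp :: "('a::field ^ 'n) set \<Rightarrow> ('a ^ 'n) set \<Rightarrow> bool" where
  "disjoint_sp S T \<longleftrightarrow> S \<inter> T = {0}"

definition is_flag :: "nat \<Rightarrow> ('a::field ^ 'n) set \<times> ('a ^ 'n) set \<Rightarrow> bool" where
  "is_flag n F \<longleftrightarrow> proj_space (n - 1) (fst F) \<and> proj_space n (snd F) \<and> fst F \<subseteq> snd F"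

definition opposite :: "('a::field ^ 'n) set \<times> ('a ^ 'n) set \<Rightarrow> ('a ^ 'n) set \<times> ('a ^ 'n) set \<Rightarrow> bool" where
  "opposite F1 F2 \<longleftrightarrow> disjoint_sp (fst F1) (snd F2) \<and> disjoint_sp (fst F2) (snd F1)"

definition coclique :: "nat \<Rightarrow> (('a::field ^ 'n) set \<times> ('a ^ 'n) set) set \<Rightarrow> bool" where
  "coclique n \<F> \<longleftrightarrow> (\<forall>F\<in>\<F>. is_flag n F) \<and> (\<forall>F1\<in>\<F>. \<forall>F2\<in>\<F>. \<not> opposite F1 F2)"

definition max_coclique :: "nat \<Rightarrow> (('a::field ^ 'n) set \<times> ('a ^ 'n) set) set \<Rightarrow> bool" where
  "max_coclique n \<F> \<longleftrightarrow> coclique n \<F> \<and>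
     (\<forall>G. is_flag n G \<and> G \<notin> \<F> \<longrightarrow> \<not> coclique n (insert G \<F>))"

definition qbin1 :: "nat \<Rightarrow> nat \<Rightarrow> nat" where
  "qbin1 q k = (q ^ k - 1) div (q - 1)"

end

theory Submission
  imports Defs
begin

lemma card_subspace:
  fixes S :: "('a::{field,finite} ^ 'n) set"
  assumes "vec.subspace S"
  shows "card S = CARD('a) ^ vec.dim S"
proof -
  obtain B where B: "B \<subseteq> S" "vec.independent B" "S \<subseteq> vec.span B" "card B = vec.dim S"
    using vec.basis_exists by blast
  have fB: "finite B" by simp
  have SB: "S = vec.span B"
    using B assms by (metis vec.span_minimal subset_antisym)
  define g where "g u = (\<Sum>v\<in>B. u v *s v)" for u :: "'a ^ 'n \<Rightarrow> 'a"
  have img: "g ` (PiE B (\<lambda>_. UNIV)) = S"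
  proof
    show "g ` (PiE B (\<lambda>_. UNIV)) \<subseteq> S"
      unfolding SB g_def by (auto intro: vec.span_sum vec.span_scale vec.span_base)
    show "S \<subseteq> g ` (PiE B (\<lambda>_. UNIV))"
    proof
      fix x assume "x \<in> S"
      then obtain u where u: "x = (\<Sum>v\<in>B. u v *s v)" using SB vec.span_finite[OF fB] by auto
      have "x = g (restrict u B)" unfolding u g_def by (auto intro: sum.cong)
      moreover have "restrict u B \<in> PiE B (\<lambda>_. UNIV)" by auto
      ultimately show "x \<in> g ` (PiE B (\<lambda>_. UNIV))" by blast
    qed
  qed
  have inj: "inj_on g (PiE B (\<lambda>_. UNIV))"
  proof
    fix u w assume u: "u \<in> PiE B (\<lambda>_. UNIV)" and w: "w \<in> PiE B (\<lambda>_. UNIV)" and e: "g u = g w"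
    have z: "(\<Sum>v\<in>B. (u v - w v) *s v) = 0"
      using e unfolding g_def by (simp add: vector_sub_rdistrib sum_subtractf)
    have c: "\<forall>c. (\<Sum>v\<in>B. c v *s v) = 0 \<longrightarrow> (\<forall>v\<in>B. c v = 0)"
      using B(2) vec.independent_explicit[of B] by simp
    have "\<forall>v\<in>B. u v - w v = 0"
      using c[rule_format, of "\<lambda>v. u v - w v", OF z] by simp
    then show "u = w" using u w by (auto simp: PiE_def extensional_def fun_eq_iff)
  qed
  have "card S = card (PiE B (\<lambda>_. (UNIV::'a set)))"
    using card_image[OF inj] img by simp
  also have "\<dots> = CARD('a) ^ card B" by (simp add: card_PiE)
  finally show ?thesis using B(4) by simp
qed

lemma ext_eq:
  fixes A B :: "('a::field ^ 'n) set"
  assumes "vec.subspace A" "vec.subspace B" "A \<subseteq> B" "vec.dim B = vec.dim A + 1"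
    "v \<in> B" "v \<notin> A"
  shows "B = vec.span (insert v A)"
proof -
  have s: "vec.span (insert v A) \<subseteq> B"
    using assms by (intro vec.span_minimal) auto
  have "vec.dim (insert v A) = vec.dim A + 1"
    using assms vec.dim_insert[of v A] vec.span_eq_iff[of A, THEN iffD2] by simp
  then show ?thesis
    using vec.subspace_dim_equal[OF vec.subspace_span assms(2) s] assms by simp
qed

lemma count_ext:
  fixes A W :: "('a::{field,finite} ^ 'n) set"
  assumes "vec.subspace A" "vec.subspace W" "A \<subseteq> W"
  shows "card {B. vec.subspace B \<and> vec.dim B = vec.dim A + 1 \<and> A \<subseteq> B \<and> B \<subseteq> W}
           * (CARD('a) ^ (vec.dim A + 1) - CARD('a) ^ vec.dim A)
         = CARD('a) ^ vec.dim W - CARD('a) ^ vec.dim A"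
proof -
  define Bs where "Bs = {B. vec.subspace B \<and> vec.dim B = vec.dim A + 1 \<and> A \<subseteq> B \<and> B \<subseteq> W}"
  have U: "W - A = (\<Union>B\<in>Bs. B - A)"
  proof
    show "(\<Union>B\<in>Bs. B - A) \<subseteq> W - A" unfolding Bs_def by auto
    show "W - A \<subseteq> (\<Union>B\<in>Bs. B - A)"
    proof
      fix v assume v: "v \<in> W - A"
      let ?B = "vec.span (insert v A)"
      have "vec.dim (insert v A) = vec.dim A + 1"
        using assms v vec.dim_insert[of v A] vec.span_eq_iff[of A, THEN iffD2] by simp
      moreover have "?B \<subseteq> W" using assms v by (intro vec.span_minimal) auto
      moreover have "A \<subseteq> ?B" by (meson subset_insertI vec.span_superset subset_trans)
      ultimately have "?B \<in> Bs" unfolding Bs_def by simp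
      moreover have "v \<in> ?B" by (simp add: vec.span_base)
      ultimately show "v \<in> (\<Union>B\<in>Bs. B - A)" using v by blast
    qed
  qed
  have disj: "\<forall>B1\<in>Bs. \<forall>B2\<in>Bs. B1 \<noteq> B2 \<longrightarrow> (B1 - A) \<inter> (B2 - A) = {}"
  proof (intro ballI impI)
    fix B1 B2 assume b: "B1 \<in> Bs" "B2 \<in> Bs" "B1 \<noteq> B2"
    show "(B1 - A) \<inter> (B2 - A) = {}"
    proof (rule ccontr)
      assume "(B1 - A) \<inter> (B2 - A) \<noteq> {}"
      then obtain v where "v \<in> B1" "v \<in> B2" "v \<notin> A" by blast
      then have "B1 = vec.span (insert v A)" "B2 = vec.span (insert v A)"
        using ext_eq[OF assms(1)] b unfolding Bs_def by auto
      then show False using b by simp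
    qed
  qed
  have cB: "\<And>B. B \<in> Bs \<Longrightarrow> card (B - A) = CARD('a) ^ (vec.dim A + 1) - CARD('a) ^ vec.dim A"
  proof -
    fix B assume "B \<in> Bs"
    then have "vec.subspace B" "vec.dim B = vec.dim A + 1" "A \<subseteq> B" unfolding Bs_def by auto
    then show "card (B - A) = CARD('a) ^ (vec.dim A + 1) - CARD('a) ^ vec.dim A"
      using card_subspace[of B] card_subspace[OF assms(1)] card_Diff_subset[of A B] by simp
  qed
  have "card (W - A) = (\<Sum>B\<in>Bs. card (B - A))"
    unfolding U by (rule card_UN_disjoint) (use disj in auto)
  also have "\<dots> = card Bs * (CARD('a) ^ (vec.dim A + 1) - CARD('a) ^ vec.dim A)"
    using cB by simp
  finally show ?thesis
    using card_subspace[OF assms(2)] card_subspace[OF assms(1)] card_Diff_subset[of A W] assms(3)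
    unfolding Bs_def by simp
qed

lemma qbin1_mult:
  assumes "q \<ge> (1::nat)"
  shows "qbin1 q j * (q - 1) = q ^ j - 1"
proof -
  have "(q - 1) dvd (q ^ j - 1)"
  proof (induction j)
    case 0 then show ?case by simp
  next
    case (Suc j)
    have "q ^ Suc j - 1 = q * (q ^ j - 1) + (q - 1)"
    proof -
      have h: "\<And>x y::nat. x \<ge> 1 \<Longrightarrow> y \<ge> 1 \<Longrightarrow> x * y - 1 = x * (y - 1) + (x - 1)"
        by (case_tac x; case_tac y) (auto simp: algebra_simps)
      have "q ^ j \<ge> 1" using assms by simp
      then show ?thesis using h[OF assms, of "q ^ j"] by simp
    qed
    then show ?case using Suc by simp
  qed
  then show ?thesis unfolding qbin1_def by simp
qed

lemma qbin1_inj: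
  assumes "q \<ge> (2::nat)" "qbin1 q j = qbin1 q m"
  shows "j = m"
proof -
  have "q ^ j - 1 = q ^ m - 1" using qbin1_mult[of q j] qbin1_mult[of q m] assms by simp
  then have "q ^ j = q ^ m" using assms
    by (metis One_nat_def Suc_diff_1 gr0I not_numeral_le_zero power_eq_0_iff)
  then show ?thesis using assms by (simp add: power_inject_exp)
qed

theorem mainTheorem4:
  fixes n :: nat
    and \<F> :: "(('a::{field,finite} ^ 'n) set \<times> ('a ^ 'n) set) set"
    and A :: "('a ^ 'n) set"
  assumes "n \<ge> 2"
    and "CARD('n) = 2 * n + 1"
    and "max_coclique n \<F>"
    and "\<exists>B. (A, B) \<in> \<F>"
  shows "(\<exists>k\<in>{1..n+1}. card {F\<in>\<F>. fst F = A} = qbin1 CARD('a) k)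
    \<and> (card {F\<in>\<F>. fst F = A} = qbin1 CARD('a) (n + 1)
         \<longleftrightarrow> (\<forall>(A', B')\<in>\<F>. \<not> disjoint_sp B' A))"
proof -
  note n2 = assms(1)
  have cc: "coclique n \<F>" using assms(3) unfolding max_coclique_def by simp
  have flag: "\<And>A' B'. (A', B') \<in> \<F> \<Longrightarrow> vec.subspace A' \<and> vec.dim A' = n \<and>
      vec.subspace B' \<and> vec.dim B' = n + 1 \<and> A' \<subseteq> B'"
    using cc n2 unfolding coclique_def is_flag_def proj_space_def by fastforce
  have nopp: "\<And>F1 F2. F1 \<in> \<F> \<Longrightarrow> F2 \<in> \<F> \<Longrightarrow> \<not> opposite F1 F2"
    using cc unfolding coclique_def by blast
  obtain B0 where B0: "(A, B0) \<in> \<F>" using assms(4) by blast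
  have sA: "vec.subspace A" and dA: "vec.dim A = n" using flag[OF B0] by auto
  define S where "S A' = {x + y |x y. x \<in> A \<and> y \<in> A'}" for A' :: "('a ^ 'n) set"
  define D where "D = {A'. \<exists>B'. (A', B') \<in> \<F> \<and> disjoint_sp A B'}"
  define W where "W = \<Inter> (S ` D)"
  define Bs where "Bs = {B. vec.subspace B \<and> vec.dim B = vec.dim A + 1 \<and> A \<subseteq> B \<and> B \<subseteq> W}"
  have sS: "\<And>A'. A' \<in> D \<Longrightarrow> vec.subspace (S A')"
    unfolding S_def D_def using flag sA by (auto intro!: vec.subspace_sums)
  have AS: "\<And>A'. A' \<in> D \<Longrightarrow> A \<subseteq> S A'"
  proof
    fix A' x assume "A' \<in> D" "x \<in> A"
    then have "vec.subspace A'" unfolding D_def using flag by auto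
    then have "0 \<in> A'" by (simp add: vec.subspace_0)
    then show "x \<in> S A'" unfolding S_def using \<open>x \<in> A\<close> by force
  qed
  have sW: "vec.subspace W" unfolding W_def using sS by (auto intro!: vec.subspace_Inter)
  have AW: "A \<subseteq> W" unfolding W_def using AS by auto
  have c1: "B \<in> Bs" if B: "(A, B) \<in> \<F>" for B
  proof -
    have fB: "vec.subspace B" "vec.dim B = vec.dim A + 1" "A \<subseteq> B" using flag[OF B] dA by auto
    have "B \<subseteq> S A'" if "A' \<in> D" for A'
    proof -
      obtain B' where B': "(A', B') \<in> \<F>" "disjoint_sp A B'" using \<open>A' \<in> D\<close> unfolding D_def by blast
      have fA': "vec.subspace A'" "A' \<subseteq> B'" using flag[OF B'(1)] by auto
      have "\<not> disjoint_sp A' B" using nopp[OF B B'(1)] B'(2) unfolding opposite_def by simp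
      moreover have "0 \<in> A' \<inter> B" using fA' fB by (simp add: vec.subspace_0)
      ultimately obtain w where w: "w \<in> A'" "w \<in> B" "w \<noteq> 0" unfolding disjoint_sp_def by blast
      have "w \<notin> A" using w fA' B'(2) unfolding disjoint_sp_def by blast
      then have eq: "B = vec.span (insert w A)" using ext_eq[OF sA fB(1) fB(3) fB(2) w(2)] by simp
      have "w \<in> S A'" unfolding S_def using w(1) vec.subspace_0[OF sA] by force
      then show ?thesis unfolding eq using AS[OF that] sS[OF that]
        by (intro vec.span_minimal) auto
    qed
    then have "B \<subseteq> W" unfolding W_def by blast
    then show ?thesis unfolding Bs_def using fB by simp
  qed
  have c2: "(A, B) \<in> \<F>" if B: "B \<in> Bs" for B
  proof (rule ccontr)
    assume nB: "(A, B) \<notin> \<F>"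
    have fB: "vec.subspace B" "vec.dim B = n + 1" "A \<subseteq> B" "B \<subseteq> W" using B dA unfolding Bs_def by auto
    have isf: "is_flag n (A, B)" unfolding is_flag_def proj_space_def using fB sA dA n2 by simp
    then have "\<not> coclique n (insert (A, B) \<F>)" using assms(3) nB unfolding max_coclique_def by blast
    then obtain F1 F2 where F12: "F1 \<in> insert (A, B) \<F>" "F2 \<in> insert (A, B) \<F>" "opposite F1 F2"
      using cc isf unfolding coclique_def by blast
    have noself: "\<not> opposite (A, B) (A, B)"
    proof
      assume "opposite (A, B) (A, B)"
      then have "A = {0}" using fB(3) vec.subspace_0[OF sA] unfolding opposite_def disjoint_sp_def by auto
      then show False using dA n2 by simp
    qed
    have key: "\<not> (disjoint_sp A B' \<and> disjoint_sp A' B)" if F': "(A', B') \<in> \<F>" for A' B'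
    proof
      assume d: "disjoint_sp A B' \<and> disjoint_sp A' B"
      then have "A' \<in> D" unfolding D_def using F' by blast
      then have BS: "B \<subseteq> S A'" using fB(4) unfolding W_def by blast
      have "B \<noteq> A" using fB dA by auto
      then obtain v where v: "v \<in> B" "v \<notin> A" using fB(3) by blast
      then obtain x y where xy: "v = x + y" "x \<in> A" "y \<in> A'" using BS unfolding S_def by blast
      have "y = v - x" using xy by simp
      then have "y \<in> B" using v(1) xy(2) fB(3) fB(1) by (auto intro: vec.subspace_diff)
      moreover have "y \<noteq> 0" using xy v by auto
      ultimately show False using d xy(3) unfolding disjoint_sp_def by blast
    qed
    show False
    proof -
      obtain a1 b1 a2 b2 where p: "F1 = (a1, b1)" "F2 = (a2, b2)" by (cases F1; cases F2)
      have o: "disjoint_sp a1 b2" "disjoint_sp a2 b1" using F12(3) p unfolding opposite_def by auto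
      show False
      proof (cases "F1 = (A, B)")
        case True
        show False
        proof (cases "F2 = (A, B)")
          case True then show False using \<open>F1 = (A, B)\<close> noself F12(3) by simp
        next
          case False then have "F2 \<in> \<F>" using F12(2) by simp
          then have "(a2, b2) \<in> \<F>" using p by simp
          then show False using key o p True by simp
        qed
      next
        case False then have "F1 \<in> \<F>" using F12(1) by simp
        then have f1: "(a1, b1) \<in> \<F>" using p by simp
        show False
        proof (cases "F2 = (A, B)")
          case True then show False using key[OF f1] o p by simp
        next
          case False then have "F2 \<in> \<F>" using F12(2) by simp
          then have "(a2, b2) \<in> \<F>" using p by simp
          then show False using nopp f1 F12(3) p by simp
        qed
      qed
    qed
  qed
  have setEq: "{F\<in>\<F>. fst F = A} = (\<lambda>B. (A, B)) ` Bs"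
    using c1 c2 by force
  have cardEq: "card {F\<in>\<F>. fst F = A} = card Bs"
    unfolding setEq by (rule card_image) (auto simp: inj_on_def)
  define q where "q = CARD('a)"
  have q2: "q \<ge> 2"
  proof -
    have "card {0::'a, 1} \<le> card (UNIV::'a set)" by (rule card_mono) auto
    then show ?thesis unfolding q_def by simp
  qed
  have B0W: "B0 \<in> Bs" using c1[OF B0] .
  have dW1: "vec.dim W \<ge> n + 1" using B0W vec.dim_subset[of B0 W] dA unfolding Bs_def by auto
  have dW2: "vec.dim W \<le> 2 * n + 1" using dim_subset_UNIV_cart_gen[of W] assms(2) by simp
  define k where "k = vec.dim W - n"
  have k: "k \<in> {1..n+1}" "vec.dim W = n + k" using dW1 dW2 unfolding k_def by auto
  have ce: "card Bs * (q ^ (n + 1) - q ^ n) = q ^ (n + k) - q ^ n"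
    using count_ext[OF sA sW AW] dA k(2) unfolding Bs_def q_def by simp
  have e1: "q ^ (n + 1) - q ^ n = q ^ n * (q - 1)" by (simp add: diff_mult_distrib2 mult.commute)
  have e2: "q ^ (n + k) - q ^ n = q ^ n * (q ^ k - 1)" by (simp add: diff_mult_distrib2 power_add)
  have "q ^ n * (card Bs * (q - 1)) = q ^ n * (q ^ k - 1)" using ce e1 e2 by (simp add: ac_simps)
  then have "card Bs * (q - 1) = q ^ k - 1" using q2 by simp
  then have "qbin1 q k = card Bs * (q - 1) div (q - 1)" unfolding qbin1_def by simp
  moreover have "q - 1 > 0" using q2 by simp
  ultimately have cB: "card Bs = qbin1 q k" by simp
  have part1: "\<exists>k\<in>{1..n+1}. card {F\<in>\<F>. fst F = A} = qbin1 CARD('a) k"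
    using k(1) cB cardEq unfolding q_def by (intro bexI[of _ k]) auto
  have part2: "k = n + 1 \<longleftrightarrow> (\<forall>(A', B')\<in>\<F>. \<not> disjoint_sp B' A)"
  proof
    assume kk: "k = n + 1"
    show "\<forall>(A', B')\<in>\<F>. \<not> disjoint_sp B' A"
    proof (rule ccontr)
      assume "\<not> (\<forall>(A', B')\<in>\<F>. \<not> disjoint_sp B' A)"
      then obtain A' B' where F': "(A', B') \<in> \<F>" "disjoint_sp B' A" by auto
      then have AD: "A' \<in> D" unfolding D_def disjoint_sp_def by (auto simp: Int_commute)
      have fA': "vec.subspace A'" "vec.dim A' = n" using flag[OF F'(1)] by auto
      have "vec.dim (S A') + vec.dim (A \<inter> A') = vec.dim A + vec.dim A'"
        unfolding S_def by (rule vec.dim_sums_Int[OF sA fA'(1)])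
      then have "vec.dim (S A') \<le> 2 * n" using dA fA' by simp
      moreover have "W \<subseteq> S A'" unfolding W_def using AD by blast
      ultimately have "vec.dim W \<le> 2 * n" using vec.dim_subset[of W "S A'"] by simp
      then show False using k kk by simp
    qed
  next
    assume all: "\<forall>(A', B')\<in>\<F>. \<not> disjoint_sp B' A"
    then have "D = {}" unfolding D_def disjoint_sp_def by (auto simp: Int_commute)
    then have "W = UNIV" unfolding W_def by simp
    then have "vec.dim W = 2 * n + 1" using vec_dim_card[where 'a='a and 'n='n] assms(2) by simp
    then show "k = n + 1" using k by simp
  qed
  have "card {F\<in>\<F>. fst F = A} = qbin1 CARD('a) (n + 1) \<longleftrightarrow> k = n + 1"
    using cB cardEq qbin1_inj[OF q2] unfolding q_def by auto
  then show ?thesis using part1 part2 by simp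
qed

end
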